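(* (1) If $q$ is even, then $\mathcal S_1$ consists of Type II points, the pencil $T\mathcal S_1$ consists of Type II lines, and $\mathcal S_1=\mathrm{Pr}(\mathcal P_{2,q})=\mathrm{Sp}(\mathcal P_{2,q})$. (2) If $q$ is odd, then: (a) $\mathcal S_1$ consists of Type III points, $T\mathcal S_1$ consists of Type II lines, and $\mathcal S_1=\mu_{\mathrm{line}}(\Pi_{-1})=\mathrm{Pr}(\mathcal P_{2,q})=\mathrm{Pr}(\Pi_{-1})$; (b) $\mathcal S_{-1}$ consists of Type II points, $T\mathcal S_{-1}$ consists of Type III lines, and $\mathcal S_{-1}=\mathrm{Sp}(\mu_{\mathrm{pt}}(\Pi_{-1}))=\mathrm{Sp}(\mathcal P_{2,q})=\mathrm{Sp}(\Pi_{-1})$.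
   Context: Let $q$ be a prime power, $\mathbb{F}_{q^3}^*=\mathbb{F}_{q^3}\setminus\{0\}$. Points of $\mathrm{PG}(2,q^3)$ have homogeneous coordinates $(x,y,z)$ and lines $[a,b,c]$. Let $\phi$ be the collineation $(x,y,z)\mapsto(z^q,x^q,y^q)$ (on lines $[d,e,f]\mapsto[f^q,d^q,e^q]$), whose fixed points form the subplane $\mathcal P_{2,q}=\{(x,x^q,x^{q^2}):x\in\mathbb{F}_{q^3}^*\}$. A point has Type I, II, III according as its $\phi$-orbit is one point, three collinear points, three non-collinear points; a line has Type I, II, III according as its $\phi$-orbit is one line, three concurrent lines, three non-concurrent lines. $\mu_{\mathrm{pt}}$ sends a Type III point $P$ to the line $P^\phi P^{\phi^2}$, $\mu_{\mathrm{line}}$ sends a Type III line $\ell$ to the point $\ell^\phi\cap\ell^{\phi^2}$; for a subplane $\mathcal B$ these are applied elementwise to its points, respectively its lines (lines meeting $\mathcal B$ in $q+1$ points). Let $T=(0,0,1)$ and $m_T$ the line $[0,0,1]$. For $\theta\in\mathbb{F}_{q^3}^*$, $\mathcal S_\theta=\{(x\theta,x^q,0):x\in\mathbb{F}_{q^3}^*\}$, $T\mathcal S_\theta=\{TX:X\in\mathcal S_\theta\}$, and $\Pi_\theta=\{(r\theta^{q+1},r^q,r^{q^2}\theta):r\in\mathbb{F}_{q^3}^*\}$ (a subplane of order $q$). For a subplane $\mathcal B$, $\mathrm{Pr}(\mathcal B)=\{TP\cap m_T:P\in\mathcal B\}$ and $\mathrm{Sp}(\mathcal B)=\{\ell\cap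 m_T:\ell\text{ a line of }\mathcal B\}$; for a set $\mathcal L$ of lines not equal to $m_T$, $\mathrm{Sp}(\mathcal L)=\{\ell\cap m_T:\ell\in\mathcal L\}$. *)

theory Defs
  imports Main "HOL-Computational_Algebra.Primes"
begin

text \<open>Projective plane PG(2,F) over a field F. A point (and likewise a line) is
represented by the set of all nonzero scalar multiples of a nonzero coordinate triple.\<close>

type_synonym 'a vec3 = "'a \<times> 'a \<times> 'a"

definition smul3 :: "'a::field \<Rightarrow> 'a vec3 \<Rightarrow> 'a vec3" where
  "smul3 c v = (case v of (x,y,z) \<Rightarrow> (c*x, c*y, c*z))"

definition proj :: "'a::field vec3 \<Rightarrow> 'a vec3 set" where
  "proj v = (\<lambda>c. smul3 c v) ` {c. c \<noteq> 0}"

definition is_pt :: "'a::field vec3 set \<Rightarrow> bool" where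
  "is_pt P \<longleftrightarrow> (\<exists>v. v \<noteq> (0,0,0) \<and> P = proj v)"

definition is_ln :: "'a::field vec3 set \<Rightarrow> bool" where
  "is_ln l \<longleftrightarrow> (\<exists>v. v \<noteq> (0,0,0) \<and> l = proj v)"

definition inc :: "'a::field vec3 set \<Rightarrow> 'a vec3 set \<Rightarrow> bool" where
  "inc P l \<longleftrightarrow> (\<forall>(x,y,z)\<in>P. \<forall>(a,b,c)\<in>l. a*x + b*y + c*z = 0)"

definition join :: "'a::field vec3 set \<Rightarrow> 'a vec3 set \<Rightarrow> 'a vec3 set" where
  "join P Q = (THE l. is_ln l \<and> inc P l \<and> inc Q l)"

definition meet :: "'a::field vec3 set \<Rightarrow> 'a vec3 set \<Rightarrow> 'a vec3 set" where
  "meet l m = (THE P. is_pt P \<and> inc P l \<and> inc P m)"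

definition frob3 :: "nat \<Rightarrow> 'a::field vec3 \<Rightarrow> 'a vec3" where
  "frob3 q v = (case v of (x,y,z) \<Rightarrow> (z^q, x^q, y^q))"

definition phi :: "nat \<Rightarrow> 'a::field vec3 set \<Rightarrow> 'a vec3 set" where
  "phi q P = frob3 q ` P"

definition orbit :: "nat \<Rightarrow> 'a::field vec3 set \<Rightarrow> 'a vec3 set set" where
  "orbit q P = {P, phi q P, phi q (phi q P)}"

definition collinear3 :: "'a::field vec3 set \<Rightarrow> 'a vec3 set \<Rightarrow> 'a vec3 set \<Rightarrow> bool" where
  "collinear3 A B C \<longleftrightarrow> (\<exists>l. is_ln l \<and> inc A l \<and> inc B l \<and> inc C l)"

definition concurrent3 :: "'a::field vec3 set \<Rightarrow> 'a vec3 set \<Rightarrow> 'a vec3 set \<Rightarrow> bool" where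
  "concurrent3 l m n \<longleftrightarrow> (\<exists>P. is_pt P \<and> inc P l \<and> inc P m \<and> inc P n)"

definition typeII_pt :: "nat \<Rightarrow> 'a::field vec3 set \<Rightarrow> bool" where
  "typeII_pt q P \<longleftrightarrow> is_pt P \<and> card (orbit q P) = 3 \<and>
     collinear3 P (phi q P) (phi q (phi q P))"

definition typeIII_pt :: "nat \<Rightarrow> 'a::field vec3 set \<Rightarrow> bool" where
  "typeIII_pt q P \<longleftrightarrow> is_pt P \<and> card (orbit q P) = 3 \<and>
     \<not> collinear3 P (phi q P) (phi q (phi q P))"

definition typeII_ln :: "nat \<Rightarrow> 'a::field vec3 set \<Rightarrow> bool" where
  "typeII_ln q l \<longleftrightarrow> is_ln l \<and> card (orbit q l) = 3 \<and>
     concurrent3 l (phi q l) (phi q (phi q l))"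

definition typeIII_ln :: "nat \<Rightarrow> 'a::field vec3 set \<Rightarrow> bool" where
  "typeIII_ln q l \<longleftrightarrow> is_ln l \<and> card (orbit q l) = 3 \<and>
     \<not> concurrent3 l (phi q l) (phi q (phi q l))"

definition mu_pt :: "nat \<Rightarrow> 'a::field vec3 set \<Rightarrow> 'a vec3 set" where
  "mu_pt q P = join (phi q P) (phi q (phi q P))"

definition mu_line :: "nat \<Rightarrow> 'a::field vec3 set \<Rightarrow> 'a vec3 set" where
  "mu_line q l = meet (phi q l) (phi q (phi q l))"

definition sub_lines :: "nat \<Rightarrow> 'a::field vec3 set set \<Rightarrow> 'a vec3 set set" where
  "sub_lines q B = {l. is_ln l \<and> card {P\<in>B. inc P l} = q + 1}"

definition Tpt :: "'a::field vec3 set" where "Tpt = proj (0,0,1)"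
definition mT :: "'a::field vec3 set" where "mT = proj (0,0,1)"

definition Pr :: "'a::field vec3 set set \<Rightarrow> 'a vec3 set set" where
  "Pr B = {meet (join Tpt P) mT | P. P \<in> B}"

definition SpL :: "'a::field vec3 set set \<Rightarrow> 'a vec3 set set" where
  "SpL L = {meet l mT | l. l \<in> L}"

definition Sp :: "nat \<Rightarrow> 'a::field vec3 set set \<Rightarrow> 'a vec3 set set" where
  "Sp q B = SpL (sub_lines q B)"

definition S_theta :: "nat \<Rightarrow> 'a::field \<Rightarrow> 'a vec3 set set" where
  "S_theta q \<theta> = {proj (x*\<theta>, x^q, 0) | x. x \<noteq> 0}"

definition TS_theta :: "nat \<Rightarrow> 'a::field \<Rightarrow> 'a vec3 set set" where
  "TS_theta q \<theta> = {join Tpt X | X. X \<in> S_theta q \<theta>}"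

definition P2q :: "nat \<Rightarrow> 'a::field vec3 set set" where
  "P2q q = {proj (x, x^q, x^(q^2)) | x. x \<noteq> 0}"

definition Pi_theta :: "nat \<Rightarrow> 'a::field \<Rightarrow> 'a vec3 set set" where
  "Pi_theta q \<theta> = {proj (r*\<theta>^(q+1), r^q, r^(q^2)*\<theta>) | r. r \<noteq> 0}"

end

theory Submission
  imports Defs "HOL-Number_Theory.Residues" "HOL-Computational_Algebra.Polynomial"
begin


definition dot3 :: "'a::field vec3 \<Rightarrow> 'a vec3 \<Rightarrow> 'a" where
  "dot3 u v = (case u of (a,b,c) \<Rightarrow> case v of (x,y,z) \<Rightarrow> a*x+b*y+c*z)"

definition cross3 :: "'a::field vec3 \<Rightarrow> 'a vec3 \<Rightarrow> 'a vec3" where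
  "cross3 u v = (case u of (u1,u2,u3) \<Rightarrow> case v of (v1,v2,v3) \<Rightarrow>
     (u2*v3 - u3*v2, u3*v1 - u1*v3, u1*v2 - u2*v1))"

lemma inc_alt: "inc P l = (\<forall>v\<in>P. \<forall>w\<in>l. dot3 v w = 0)"
  by (simp add: inc_def dot3_def split_beta mult.commute)

lemma dot_sym: "dot3 u v = dot3 v u"
  by (cases u, cases v) (simp add: dot3_def algebra_simps)

lemma inc_sym: "inc P l = inc l P"
  unfolding inc_alt by (auto simp add: dot_sym)

lemma is_ln_eq: "is_ln = is_pt"
  unfolding is_ln_def[abs_def] is_pt_def[abs_def] by simp

lemma join_eq: "Defs.join = Defs.meet"
  unfolding Defs.join_def[abs_def] Defs.meet_def[abs_def] is_ln_eq by (simp add: inc_sym)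

lemma concurrent3_eq: "concurrent3 = collinear3"
  unfolding concurrent3_def[abs_def] collinear3_def[abs_def] is_ln_eq by (simp add: inc_sym)

lemma typeII_ln_eq: "typeII_ln = typeII_pt"
  unfolding typeII_ln_def[abs_def] typeII_pt_def[abs_def] is_ln_eq concurrent3_eq ..

lemma typeIII_ln_eq: "typeIII_ln = typeIII_pt"
  unfolding typeIII_ln_def[abs_def] typeIII_pt_def[abs_def] is_ln_eq concurrent3_eq ..

lemma smul3_simp[simp]: "smul3 c (x,y,z) = (c*x,c*y,c*z)"
  by (simp add: smul3_def)

lemma mem_proj: "w \<in> proj v \<longleftrightarrow> (\<exists>c. c \<noteq> 0 \<and> w = smul3 c v)"
  unfolding proj_def by auto

lemma self_mem_proj: "v \<in> proj v"
  unfolding mem_proj by (rule exI[of _ 1]) (cases v, auto)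

lemma proj_smul: "c \<noteq> 0 \<Longrightarrow> proj (smul3 c v) = proj v"
proof -
  assume c: "c \<noteq> 0"
  obtain x y z where v: "v = (x,y,z)" by (cases v)
  show ?thesis unfolding set_eq_iff mem_proj v
  proof (intro allI iffI)
    fix w assume "\<exists>d. d \<noteq> 0 \<and> w = smul3 d (smul3 c (x, y, z))"
    then obtain d where d: "d \<noteq> 0" "w = smul3 d (smul3 c (x, y, z))" by blast
    have "w = smul3 (d*c) (x,y,z)" using d(2) by (simp add: mult.assoc)
    moreover have "d*c \<noteq> 0" using d(1) c by simp
    ultimately show "\<exists>d. d \<noteq> 0 \<and> w = smul3 d (x, y, z)" by blast
  next
    fix w assume "\<exists>d. d \<noteq> 0 \<and> w = smul3 d (x, y, z)"
    then obtain d where d: "d \<noteq> 0" "w = smul3 d (x, y, z)" by blast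
    have "w = smul3 (d/c) (smul3 c (x,y,z))" using d(2) c by simp
    moreover have "d/c \<noteq> 0" using d(1) c by simp
    ultimately show "\<exists>d. d \<noteq> 0 \<and> w = smul3 d (smul3 c (x, y, z))" by blast
  qed
qed

lemma proj_eq_iff: "proj u = proj v \<longleftrightarrow> (\<exists>c. c \<noteq> 0 \<and> v = smul3 c u)"
proof
  assume "proj u = proj v"
  then have "v \<in> proj u" using self_mem_proj by metis
  thus "\<exists>c. c \<noteq> 0 \<and> v = smul3 c u" by (simp add: mem_proj)
qed (auto simp: proj_smul)

lemma proj_eqI: "c \<noteq> 0 \<Longrightarrow> v = smul3 c u \<Longrightarrow> proj u = proj v"
  using proj_eq_iff by blast

lemma dot_smul: "dot3 (smul3 c u) (smul3 d v) = c*d*dot3 u v"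
  by (cases u, cases v) (simp add: dot3_def algebra_simps)

lemma inc_proj: "inc (proj u) (proj v) \<longleftrightarrow> dot3 u v = 0"
proof
  assume "inc (proj u) (proj v)"
  then show "dot3 u v = 0" using self_mem_proj[of u] self_mem_proj[of v]
    unfolding inc_alt by blast
next
  assume h: "dot3 u v = 0"
  show "inc (proj u) (proj v)" unfolding inc_alt
  proof (intro ballI)
    fix a b assume "a \<in> proj u" "b \<in> proj v"
    then obtain c d where "a = smul3 c u" "b = smul3 d v" unfolding mem_proj by blast
    then show "dot3 a b = 0" by (simp add: h dot_smul)
  qed
qed

lemma is_pt_proj: "v \<noteq> (0,0,0) \<Longrightarrow> is_pt (proj v)"
  unfolding is_pt_def by blast

lemma par_lemma:
  assumes "u \<noteq> (0,0,0)" "cross3 u v = (0,0,0)"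
  shows "\<exists>c. v = smul3 c u"
proof -
  obtain u1 u2 u3 where u: "u = (u1,u2,u3)" by (cases u)
  obtain v1 v2 v3 where v: "v = (v1,v2,v3)" by (cases v)
  have e: "u2*v3 = u3*v2" "u3*v1 = u1*v3" "u1*v2 = u2*v1"
    using assms(2) unfolding u v cross3_def by auto
  show ?thesis
  proof (cases "u1 = 0")
    case False
    show ?thesis unfolding u v using False e
      by (intro exI[of _ "v1/u1"]) (auto simp: field_simps)
  next
    case u1: True
    show ?thesis
    proof (cases "u2 = 0")
      case False
      show ?thesis unfolding u v using False e u1
        by (intro exI[of _ "v2/u2"]) (auto simp: field_simps)
    next
      case u2: True
      then have "u3 \<noteq> 0" using assms(1) u1 u by auto
      then show ?thesis unfolding u v using e u1 u2
        by (intro exI[of _ "v3/u3"]) (auto simp: field_simps)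
    qed
  qed
qed

lemma cross_smul: "cross3 u (smul3 c u) = (0,0,0)"
  by (cases u) (auto simp: cross3_def algebra_simps)

lemma proj_eq_cross:
  assumes "u \<noteq> (0,0,0)" "v \<noteq> (0,0,0)"
  shows "proj u = proj v \<longleftrightarrow> cross3 u v = (0,0,0)"
proof
  assume "proj u = proj v"
  then obtain c where "v = smul3 c u" using proj_eq_iff by blast
  then show "cross3 u v = (0,0,0)" by (simp add: cross_smul)
next
  assume "cross3 u v = (0,0,0)"
  then obtain c where c: "v = smul3 c u" using par_lemma assms(1) by blast
  then have "c \<noteq> 0" using assms(2) by (cases u) auto
  then show "proj u = proj v" using c proj_eqI by blast
qed

lemma dot_cross1: "dot3 w (cross3 w v) = 0"
  by (cases w, cases v) (simp add: dot3_def cross3_def algebra_simps)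
lemma dot_cross2: "dot3 w (cross3 u w) = 0"
  by (cases w, cases u) (simp add: dot3_def cross3_def algebra_simps)

lemma triple: "cross3 w (cross3 u v) = (dot3 w v * fst u - dot3 w u * fst v,
   dot3 w v * fst (snd u) - dot3 w u * fst (snd v), dot3 w v * snd (snd u) - dot3 w u * snd (snd v))"
  by (cases w, cases u, cases v) (simp add: dot3_def cross3_def algebra_simps)

lemma meet_proj:
  assumes "cross3 u v \<noteq> (0,0,0)"
  shows "Defs.meet (proj u) (proj v) = proj (cross3 u v)"
  unfolding Defs.meet_def
proof (rule the_equality)
  show "is_pt (proj (cross3 u v)) \<and> inc (proj (cross3 u v)) (proj u) \<and> inc (proj (cross3 u v)) (proj v)"
    using assms by (simp add: is_pt_proj inc_proj dot_sym dot_cross1 dot_cross2)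
next
  fix X assume X: "is_pt X \<and> inc X (proj u) \<and> inc X (proj v)"
  then obtain w where w0: "w \<noteq> (0,0,0)" "X = proj w"
    unfolding is_pt_def by blast
  then have w: "w \<noteq> (0,0,0)" "X = proj w" "dot3 w u = 0" "dot3 w v = 0"
    using X by (auto simp: inc_proj)
  then have "cross3 w (cross3 u v) = (0,0,0)" by (simp add: triple)
  then show "X = proj (cross3 u v)" using w assms proj_eq_cross by blast
qed

lemma join_proj:
  "cross3 u v \<noteq> (0,0,0) \<Longrightarrow> Defs.join (proj u) (proj v) = proj (cross3 u v)"
  by (simp add: join_eq meet_proj)

definition det3 where "det3 u v w = dot3 w (cross3 u v)"

lemma collinear_proj:
  assumes "cross3 u v \<noteq> (0,0,0)"
  shows "collinear3 (proj u) (proj v) (proj w) \<longleftrightarrow> det3 u v w = 0"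
proof
  assume "collinear3 (proj u) (proj v) (proj w)"
  then obtain l where l: "is_ln l" "inc (proj u) l" "inc (proj v) l" "inc (proj w) l"
    unfolding collinear3_def by blast
  then obtain n where n: "n \<noteq> (0,0,0)" "l = proj n" unfolding is_ln_def by blast
  have "dot3 n u = 0" "dot3 n v = 0" "dot3 n w = 0" using l n by (auto simp: inc_proj dot_sym)
  then have "cross3 n (cross3 u v) = (0,0,0)" by (simp add: triple)
  then obtain c where "cross3 u v = smul3 c n" using par_lemma n by blast
  moreover have "dot3 w (smul3 c n) = c * dot3 n w"
    by (cases n, cases w) (simp add: dot3_def algebra_simps)
  ultimately show "det3 u v w = 0" using \<open>dot3 n w = 0\<close> unfolding det3_def
    by simp
next
  assume "det3 u v w = 0"
  then show "collinear3 (proj u) (proj v) (proj w)" unfolding collinear3_def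
    using assms by (intro exI[of _ "proj (cross3 u v)"])
      (simp add: is_ln_eq is_pt_proj inc_proj dot_sym dot_cross1 dot_cross2 det3_def)
qed



lemma card_fibers:
  assumes "finite A" "\<And>y. y \<in> f ` A \<Longrightarrow> card {x\<in>A. f x = y} = m"
  shows "card A = card (f ` A) * m"
proof -
  have A: "A = (\<Union>y\<in>f ` A. {x\<in>A. f x = y})" by auto
  have "card (\<Union>y\<in>f ` A. {x\<in>A. f x = y}) = (\<Sum>y\<in>f ` A. card {x\<in>A. f x = y})"
    by (rule card_UN_disjoint) (use assms(1) in auto)
  also have "\<dots> = (\<Sum>y\<in>f ` A. m)" using assms(2) by simp
  finally show ?thesis using A by simp
qed

lemma pow_card_gen: "(x::'a::{field,finite})^(card (UNIV::'a set)) = x"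
proof (cases "x = 0")
  case False
  have "x * (\<Prod>y\<in>UNIV-{0}. x * y) = x * x ^ (card (UNIV :: 'a set) - 1) * \<Prod>(UNIV-{0})"
    by (simp add: prod.distrib mult_ac)
  also have "x * x ^ (card (UNIV :: 'a set) - 1) = x ^ Suc (card (UNIV :: 'a set) - 1)"
    by (subst power_Suc) auto
  also have "Suc (card (UNIV :: 'a set) - 1) = card (UNIV :: 'a set)"
    using finite_UNIV_card_ge_0[where ?'a = 'a] by simp
  also have "(\<Prod>y\<in>UNIV-{0}. x * y) = (\<Prod>y\<in>UNIV-{0}. y)"
    by (rule prod.reindex_bij_witness[of _ "\<lambda>y. y / x" "\<lambda>y. x * y"]) (use False in auto)
  finally show ?thesis
    by simp
qed (use finite_UNIV_card_ge_0[where ?'a = 'a] in auto)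

context
  fixes q :: nat
  assumes pp: "\<exists>p k. prime p \<and> 0 < k \<and> q = p ^ k"
    and cardF: "card (UNIV :: 'a::{field,finite} set) = q ^ 3"
begin

lemma q_ge2: "q \<ge> 2"
proof -
  obtain p k where pk: "prime p" "0 < k" "q = p ^ k" using pp by blast
  have "p \<ge> 2" using pk(1) prime_ge_2_nat by blast
  moreover have "p ^ 1 \<le> p ^ k" using pk(2) \<open>p \<ge> 2\<close> by (intro power_increasing) auto
  ultimately show ?thesis using pk(3) by simp
qed

lemma charp: "\<exists>p k. prime p \<and> 0 < k \<and> q = p ^ k \<and> CHAR('a) = p"
proof -
  obtain p k where pk: "prime p" "0 < k" "q = p ^ k" using pp by blast
  have pos: "CHAR('a) > 0" by (rule finite_imp_CHAR_pos) simp
  have pr: "prime CHAR('a)" using prime_CHAR_semidom[OF pos] .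
  have "CHAR('a) dvd card (UNIV :: 'a set)" by (rule CHAR_dvd_CARD)
  then have "CHAR('a) dvd p ^ (k*3)" using cardF pk(3) by (simp add: power_mult)
  then have "CHAR('a) dvd p" using pr prime_dvd_power by blast
  then have "CHAR('a) = p" using pr pk(1) primes_dvd_imp_eq by blast
  then show ?thesis using pk by blast
qed

lemma frob_add: "((x::'a) + y) ^ q = x ^ q + y ^ q"
proof -
  obtain p k where pk: "prime p" "0 < k" "q = p ^ k" "CHAR('a) = p" using charp by blast
  show ?thesis by (rule freshmans_dream') (use pk in auto)
qed

lemma pw3: "(x::'a) ^ (q^3) = x"
  using pow_card_gen[of x] cardF by simp

lemma frob_neg: "(- (x::'a)) ^ q = - (x ^ q)"
proof -
  have "(- x) ^ q + x ^ q = 0"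
    using frob_add[of "-x" x] q_ge2 by (simp add: power_0_left)
  then show ?thesis by (simp add: eq_neg_iff_add_eq_0)
qed

lemma frob_diff: "((x::'a) - y) ^ q = x ^ q - y ^ q"
  using frob_add[of x "-y"] frob_neg[of y] by simp

lemma pw_qq: "((x::'a) ^ q) ^ q = x ^ (q^2)"
  by (simp add: power_mult[symmetric] power2_eq_square)

lemma pw_q2q: "((x::'a) ^ (q^2)) ^ q = x"
  using pw3[of x] by (simp add: power_mult[symmetric] power3_eq_cube power2_eq_square mult.assoc)

lemma pw_qq2: "((x::'a) ^ q) ^ (q^2) = x"
  using pw3[of x] by (simp add: power_mult[symmetric] power3_eq_cube power2_eq_square mult.assoc mult.commute)

lemma pw_q2q2: "((x::'a) ^ (q^2)) ^ (q^2) = x ^ q"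
  using pw_qq2[of "x^q"] pw_qq[of x]
  by (metis pw_q2q)

lemma frob_add2: "((x::'a) + y) ^ (q^2) = x ^ (q^2) + y ^ (q^2)"
  by (simp add: pw_qq[symmetric] frob_add)

lemma frob_neg2: "(- (x::'a)) ^ (q^2) = - (x ^ (q^2))"
  by (simp add: pw_qq[symmetric] frob_neg)

lemma frob_diff2: "((x::'a) - y) ^ (q^2) = x ^ (q^2) - y ^ (q^2)"
  by (simp add: pw_qq[symmetric] frob_diff)

lemmas fr_simps = frob_add frob_neg frob_diff pw_qq pw_q2q pw_qq2 pw_q2q2 frob_add2 frob_neg2
  frob_diff2 power_mult_distrib power_inverse


definition Tr :: "'a \<Rightarrow> 'a" where "Tr z = z + z^q + z^(q^2)"

lemma Tr_add: "Tr (x + y) = Tr x + Tr y"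
  unfolding Tr_def by (simp add: frob_add frob_add2 algebra_simps)

lemma Tr_in_K: "(Tr z) ^ q = Tr z"
  unfolding Tr_def by (simp add: frob_add pw_qq pw_q2q algebra_simps)

lemma Tr_scal: "c ^ q = c \<Longrightarrow> Tr (c * z) = c * Tr z"
  unfolding Tr_def by (simp add: power_mult_distrib pw_qq[symmetric] algebra_simps)

lemma card_K_le: "card {c::'a. c ^ q = c} \<le> q"
proof -
  define P :: "'a poly" where "P = monom 1 q - [:0,1:]"
  have q2: "q \<ge> 2" by (rule q_ge2)
  have "coeff P q = 1" using q2 by (simp add: P_def coeff_pCons split: nat.split)
  then have P0: "P \<noteq> 0" by auto
  have dP: "degree P \<le> q" unfolding P_def
    by (rule degree_diff_le) (use q2 in \<open>auto simp: degree_monom_eq degree_pCons_eq_if\<close>)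
  have "{c::'a. c ^ q = c} = {x. poly P x = 0}" by (auto simp: P_def poly_monom)
  then show ?thesis using card_poly_roots_bound[OF P0] dP by simp
qed

lemma card_K0_le: "card {z::'a. Tr z = 0} \<le> q^2"
proof -
  define P :: "'a poly" where "P = monom 1 (q^2) + monom 1 q + [:0,1:]"
  have q2: "q \<ge> 2" by (rule q_ge2)
  have qq: "q < q^2" using q2 by (simp add: power2_eq_square)
  have "coeff P (q^2) = 1" using q2 qq by (simp add: P_def coeff_pCons coeff_monom split: nat.split)
  then have P0: "P \<noteq> 0" by auto
  have dP: "degree P \<le> q^2" unfolding P_def
    by (intro degree_add_le) (use q2 qq in \<open>auto simp: degree_monom_eq degree_pCons_eq_if\<close>)
  have "{z::'a. Tr z = 0} = {x. poly P x = 0}" by (auto simp: P_def poly_monom Tr_def algebra_simps)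
  then show ?thesis using card_poly_roots_bound[OF P0] dP by simp
qed

lemma card_K_K0: "card {c::'a. c ^ q = c} = q \<and> card {z::'a. Tr z = 0} = q^2"
proof -
  define K where "K = {c::'a. c ^ q = c}"
  define K0 where "K0 = {z::'a. Tr z = 0}"
  have fib: "card {x\<in>UNIV. Tr x = y} = card K0" if yy: "y \<in> Tr ` UNIV" for y
  proof -
    obtain z0 where y: "y = Tr z0" using yy by blast
    have "{x\<in>UNIV. Tr x = y} = (\<lambda>k. z0 + k) ` K0"
    proof (rule Set.set_eqI, rule iffI)
      fix x assume "x \<in> {x\<in>UNIV. Tr x = y}"
      then have "Tr (x - z0) = 0" using Tr_add[of "x - z0" z0] y by simp
      then show "x \<in> (\<lambda>k. z0 + k) ` K0" unfolding K0_def
        by (intro image_eqI[of _ _ "x - z0"]) auto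
    next
      fix x assume "x \<in> (\<lambda>k. z0 + k) ` K0"
      then show "x \<in> {x\<in>UNIV. Tr x = y}" using y by (auto simp: K0_def Tr_add)
    qed
    also have "card \<dots> = card K0" by (rule card_image) (auto simp: inj_on_def)
    finally show ?thesis .
  qed
  have "card (UNIV::'a set) = card (Tr ` UNIV) * card K0"
    by (rule card_fibers) (use fib in auto)
  moreover have "card (Tr ` UNIV) \<le> card K"
    by (rule card_mono) (auto simp: K_def Tr_in_K)
  ultimately have le: "q^3 \<le> card K * card K0" using cardF by (metis mult_le_mono1)
  have a: "card K \<le> q" using card_K_le K_def by simp
  have b: "card K0 \<le> q^2" using card_K0_le K0_def by simp
  have "q^3 \<le> q * card K0" using le a by (meson dual_order.trans mult_le_mono1)
  then have "q * q^2 \<le> q * card K0" by (simp add: power3_eq_cube power2_eq_square mult.assoc)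
  then have "q^2 \<le> card K0" using q_ge2 by simp
  then have c0: "card K0 = q^2" using b by simp
  have "q^3 \<le> card K * q^2" using le c0 by simp
  then have "q * q^2 \<le> card K * q^2" by (simp add: power3_eq_cube power2_eq_square mult.assoc)
  then have "q \<le> card K" using q_ge2 by simp
  then show ?thesis using a c0 K_def K0_def by simp
qed


definition gB :: "'a \<Rightarrow> 'a \<Rightarrow> 'a vec3" where "gB s x = (x, x^q, s * x^(q^2))"

definition Bs :: "'a \<Rightarrow> 'a vec3 set set" where "Bs s = {proj (gB s x) | x. x \<noteq> 0}"

lemma gB_nz: "x \<noteq> 0 \<Longrightarrow> gB s x \<noteq> (0,0,0)"
  by (simp add: gB_def)

lemma dot_gB: "s * s = 1 \<Longrightarrow> dot3 (gB s x) (gB s a) = Tr (a * x)"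
proof -
  assume ss: "s * s = 1"
  have "s * x^(q^2) * (s * a^(q^2)) = (s*s) * (a^(q^2) * x^(q^2))" by (simp add: algebra_simps)
  then show ?thesis using ss by (simp add: gB_def dot3_def Tr_def power_mult_distrib algebra_simps)
qed

lemma gB_eq:
  assumes "x \<noteq> 0" "s \<noteq> 0"
  shows "proj (gB s y) = proj (gB s x) \<longleftrightarrow> (\<exists>c. c \<noteq> 0 \<and> c ^ q = c \<and> y = c * x)"
proof
  assume "proj (gB s y) = proj (gB s x)"
  then obtain c where c: "c \<noteq> 0" "gB s y = smul3 c (gB s x)" using proj_eq_iff by metis
  then have y: "y = c * x" "y ^ q = c * x ^ q" by (auto simp: gB_def)
  then have "c ^ q * x ^ q = c * x ^ q" by (simp add: power_mult_distrib)
  then have "c ^ q = c" using assms(1) by simp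
  then show "\<exists>c. c \<noteq> 0 \<and> c ^ q = c \<and> y = c * x" using c y by blast
next
  assume "\<exists>c. c \<noteq> 0 \<and> c ^ q = c \<and> y = c * x"
  then obtain c where c: "c \<noteq> 0" "c ^ q = c" "y = c * x" by blast
  have "c ^ (q^2) = c" using c(2) pw_qq[of c] by simp
  then have "gB s y = smul3 c (gB s x)" using c by (simp add: gB_def power_mult_distrib algebra_simps)
  then show "proj (gB s y) = proj (gB s x)" using c(1) proj_eqI[of c] by metis
qed

lemma cross_gB: "s * s = 1 \<Longrightarrow>
  cross3 (gB s x) (gB s y) = smul3 s (gB s (x^q * y^(q^2) - x^(q^2) * y^q))"
proof -
  assume ss: "s * s = 1"
  have e: "s * (s * z) = z" for z using ss by (simp add: mult.assoc[symmetric])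
  show ?thesis
    by (simp add: gB_def cross3_def fr_simps algebra_simps e)
qed

lemma Tr0: "Tr 0 = 0"
  using q_ge2 by (simp add: Tr_def power_0_left)

lemma card_line_pts:
  assumes ss: "s * s = 1" and a: "a \<noteq> 0"
  shows "card {P \<in> Bs s. inc P (proj (gB s a))} = q + 1"
proof -
  have s0: "s \<noteq> 0" using ss by auto
  define Z where "Z = {x. x \<noteq> 0 \<and> Tr (a * x) = 0}"
  define K where "K = {c::'a. c ^ q = c}"
  define K0 where "K0 = {z::'a. Tr z = 0}"
  have cK: "card K = q" and cK0: "card K0 = q^2" using card_K_K0 K_def K0_def by auto
  have img: "{P \<in> Bs s. inc P (proj (gB s a))} = (\<lambda>x. proj (gB s x)) ` Z"
    unfolding Bs_def Z_def using dot_gB[OF ss] by (auto simp: inc_proj)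
  have "Z = (\<lambda>z. z / a) ` (K0 - {0})"
  proof (rule Set.set_eqI, rule iffI)
    fix x assume "x \<in> Z"
    then show "x \<in> (\<lambda>z. z / a) ` (K0 - {0})" unfolding Z_def K0_def using a
      by (intro image_eqI[of _ _ "a * x"]) auto
  qed (auto simp: Z_def K0_def a)
  then have "card Z = card (K0 - {0})"
    using a by (simp add: card_image inj_on_def)
  also have "\<dots> = q^2 - 1" using cK0 Tr0 by (simp add: K0_def)
  finally have cZ: "card Z = q^2 - 1" .
  have fib: "card {y\<in>Z. proj (gB s y) = w} = q - 1" if w: "w \<in> (\<lambda>x. proj (gB s x)) ` Z" for w
  proof -
    obtain x where x: "x \<in> Z" "w = proj (gB s x)" using w by blast
    have x0: "x \<noteq> 0" using x Z_def by auto
    have "{y\<in>Z. proj (gB s y) = w} = (\<lambda>c. c * x) ` (K - {0})"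
    proof (rule Set.set_eqI, rule iffI)
      fix y assume "y \<in> {y\<in>Z. proj (gB s y) = w}"
      then obtain c where "c \<noteq> 0" "c ^ q = c" "y = c * x"
        using gB_eq[OF x0 s0] x by auto
      then show "y \<in> (\<lambda>c. c * x) ` (K - {0})" unfolding K_def by auto
    next
      fix y assume "y \<in> (\<lambda>c. c * x) ` (K - {0})"
      then obtain c where c: "c \<noteq> 0" "c ^ q = c" "y = c * x" unfolding K_def by auto
      have "Tr (a * y) = c * Tr (a * x)" using Tr_scal[OF c(2), of "a*x"] c(3)
        by (simp add: algebra_simps)
      then have "y \<in> Z" using x c x0 by (simp add: Z_def)
      moreover have "proj (gB s y) = w" using gB_eq[OF x0 s0] c x by blast
      ultimately show "y \<in> {y\<in>Z. proj (gB s y) = w}" by blast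
    qed
    also have "card \<dots> = card (K - {0})" using x0 by (simp add: card_image inj_on_def)
    also have "\<dots> = q - 1" using cK q_ge2 by (simp add: K_def power_0_left)
    finally show ?thesis .
  qed
  have "card Z = card ((\<lambda>x. proj (gB s x)) ` Z) * (q - 1)"
    by (rule card_fibers) (use fib in auto)
  moreover have "q^2 - 1 = (q + 1) * (q - 1)" using q_ge2
    by (simp add: power2_eq_square algebra_simps)
  ultimately have eq: "(q + 1) * (q - 1) = card ((\<lambda>x. proj (gB s x)) ` Z) * (q - 1)"
    using cZ by simp
  have "q - 1 \<noteq> 0" using q_ge2 by simp
  then have "card ((\<lambda>x. proj (gB s x)) ` Z) = q + 1" using eq mult_right_cancel by metis
  then show ?thesis using img by simp
qed


lemma gB_zero: "gB s 0 = (0,0,0)"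
  using q_ge2 by (simp add: gB_def power_0_left)

lemma sub_lines_Bs:
  assumes ss: "s * s = 1"
  shows "sub_lines q (Bs s) = Bs s"
proof (rule Set.set_eqI, rule iffI)
  fix l assume "l \<in> Bs s"
  then obtain a where a: "a \<noteq> 0" "l = proj (gB s a)" unfolding Bs_def by blast
  then show "l \<in> sub_lines q (Bs s)" unfolding sub_lines_def
    using card_line_pts[OF ss a(1)] gB_nz[OF a(1)] by (simp add: is_ln_eq is_pt_proj)
next
  fix l assume l: "l \<in> sub_lines q (Bs s)"
  define S where "S = {P \<in> Bs s. inc P l}"
  have cS: "card S = q + 1" and ln: "is_ln l" using l unfolding sub_lines_def S_def by auto
  obtain w where w: "w \<noteq> (0,0,0)" "l = proj w" using ln unfolding is_ln_def by blast
  have "S \<noteq> {}" using cS by auto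
  then obtain P where P: "P \<in> S" by blast
  have "card (S - {P}) = q" using cS P by (simp add: card_Diff_singleton)
  then have "S - {P} \<noteq> {}" using q_ge2 by (metis card.empty not_numeral_le_zero)
  then obtain Q where Q: "Q \<in> S" "Q \<noteq> P" by blast
  obtain x where x: "x \<noteq> 0" "P = proj (gB s x)" using P unfolding S_def Bs_def by blast
  obtain y where y: "y \<noteq> 0" "Q = proj (gB s y)" using Q unfolding S_def Bs_def by blast
  have cr: "cross3 (gB s x) (gB s y) \<noteq> (0,0,0)"
    using proj_eq_cross[OF gB_nz[OF x(1)] gB_nz[OF y(1)]] x y Q(2) by auto
  have d1: "dot3 w (gB s x) = 0" using P x w unfolding S_def by (simp add: inc_proj dot_sym)
  have d2: "dot3 w (gB s y) = 0" using Q y w unfolding S_def by (simp add: inc_proj dot_sym)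
  have "cross3 w (cross3 (gB s x) (gB s y)) = (0,0,0)" using d1 d2 by (simp add: triple)
  then have lc: "l = proj (cross3 (gB s x) (gB s y))" using proj_eq_cross[OF w(1) cr] w by simp
  define a where "a = x^q * y^(q^2) - x^(q^2) * y^q"
  have ce: "cross3 (gB s x) (gB s y) = smul3 s (gB s a)" using cross_gB[OF ss] a_def by simp
  have a0: "a \<noteq> 0" using cr ce gB_zero by auto
  have s0: "s \<noteq> 0" using ss by auto
  have "l = proj (gB s a)" using lc ce proj_smul[OF s0] by simp
  then show "l \<in> Bs s" using a0 unfolding Bs_def by blast
qed


lemma q0: "q \<noteq> 0" using q_ge2 by simp

lemma frob3_simp: "frob3 q (a, b, c) = (c ^ q, a ^ q, b ^ q)"
  by (simp add: frob3_def)

lemma phi_proj: "phi q (proj (v::'a vec3)) = proj (frob3 q v)"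
proof -
  obtain x y z where v: "v = (x,y,z)" by (cases v)
  have fs: "frob3 q (smul3 c v) = smul3 (c^q) (frob3 q v)" for c
    by (simp add: v frob3_simp power_mult_distrib)
  show ?thesis unfolding phi_def
  proof (rule Set.set_eqI, rule iffI)
    fix w assume "w \<in> frob3 q ` proj v"
    then obtain u where u: "u \<in> proj v" "w = frob3 q u" by (rule imageE)
    obtain c where c0: "c \<noteq> 0" "u = smul3 c v" using u(1) unfolding mem_proj by blast
    have c: "c \<noteq> 0" "w = frob3 q (smul3 c v)" using c0 u(2) by simp_all
    have "w = smul3 (c^q) (frob3 q v)" using c(2) fs by simp
    moreover have "c^q \<noteq> 0" using c(1) q0 by simp
    ultimately show "w \<in> proj (frob3 q v)" unfolding mem_proj by blast
  next
    fix w assume "w \<in> proj (frob3 q v)"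
    then obtain d where d: "d \<noteq> 0" "w = smul3 d (frob3 q v)" unfolding mem_proj by (elim exE conjE)
    have "w = frob3 q (smul3 (d^(q^2)) v)" using d(2) unfolding fs by (simp add: pw_q2q)
    moreover have "smul3 (d^(q^2)) v \<in> proj v" unfolding mem_proj using d(1)
      by (intro exI[of _ "d^(q^2)"]) simp
    ultimately show "w \<in> frob3 q ` proj v" by (rule image_eqI)
  qed
qed

lemma type_lemma:
  fixes u v w :: "'a vec3"
  assumes "frob3 q u = v" "frob3 q v = w" "cross3 u v \<noteq> (0,0,0)" "cross3 v w \<noteq> (0,0,0)"
    "cross3 u w \<noteq> (0,0,0)"
  shows "(typeII_pt q (proj u) \<longleftrightarrow> det3 u v w = 0) \<and> (typeIII_pt q (proj u) \<longleftrightarrow> det3 u v w \<noteq> 0)"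
proof -
  have cz1: "cross3 (0,0,0) y = (0,0,0)" for y :: "'a vec3" by (cases y) (simp add: cross3_def)
  have cz2: "cross3 y (0,0,0) = (0,0,0)" for y :: "'a vec3" by (cases y) (simp add: cross3_def)
  have nz: "u \<noteq> (0,0,0)" "v \<noteq> (0,0,0)" "w \<noteq> (0,0,0)"
  proof -
    show "u \<noteq> (0,0,0)"
    proof
      assume "u = (0,0,0)" then have "cross3 u v = (0,0,0)" by (simp add: cz1)
      then show False using assms(3) by simp
    qed
    show "v \<noteq> (0,0,0)"
    proof
      assume "v = (0,0,0)" then have "cross3 u v = (0,0,0)" by (simp add: cz2)
      then show False using assms(3) by simp
    qed
    show "w \<noteq> (0,0,0)"
    proof
      assume "w = (0,0,0)" then have "cross3 v w = (0,0,0)" by (simp add: cz2)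
      then show False using assms(4) by simp
    qed
  qed
  have d: "proj u \<noteq> proj v" "proj v \<noteq> proj w" "proj u \<noteq> proj w"
    using proj_eq_cross[OF nz(1) nz(2)] proj_eq_cross[OF nz(2) nz(3)] proj_eq_cross[OF nz(1) nz(3)]
      assms(3-5) by simp_all
  have ph1: "phi q (proj u) = proj v" using phi_proj[of u] unfolding assms(1) .
  have ph2': "phi q (proj v) = proj w" using phi_proj[of v] unfolding assms(2) .
  have ph2: "phi q (phi q (proj u)) = proj w" unfolding ph1 ph2' ..
  have o: "orbit q (proj u) = {proj u, proj v, proj w}"
    unfolding orbit_def ph1 ph2' ..
  have c3: "card (orbit q (proj u)) = 3" unfolding o using d by simp
  have cl: "collinear3 (proj u) (proj v) (proj w) \<longleftrightarrow> det3 u v w = 0"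
    by (rule collinear_proj[OF assms(3)])
  show ?thesis unfolding typeII_pt_def typeIII_pt_def ph1 ph2' cl
    using c3 is_pt_proj[OF nz(1)] by simp
qed

lemma char2_odd: "odd q \<Longrightarrow> (2::'a) \<noteq> 0"
proof -
  assume o: "odd q"
  obtain p k where pk: "prime p" "0 < k" "q = p ^ k" "CHAR('a) = p" using charp by blast
  show "(2::'a) \<noteq> 0"
  proof
    assume "(2::'a) = 0"
    then have "of_nat 2 = (0::'a)" by simp
    then have "CHAR('a) dvd 2" by (rule of_nat_eq_0_iff_char_dvd[THEN iffD1])
    then have "p dvd 2" using pk(4) by simp
    then have "p \<le> 2" by (simp add: dvd_imp_le)
    then have "p = 2" using prime_ge_2_nat[OF pk(1)] by simp
    then show False using o pk(2,3) by simp
  qed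
qed

lemma char2_even: "even q \<Longrightarrow> (2::'a) = 0"
proof -
  assume e: "even q"
  obtain p k where pk: "prime p" "0 < k" "q = p ^ k" "CHAR('a) = p" using charp by blast
  have "2 dvd p ^ k" using e unfolding pk(3) .
  then have "2 dvd p" using prime_dvd_power[OF two_is_prime_nat] by blast
  then have "2 = p" using primes_dvd_imp_eq[OF two_is_prime_nat pk(1)] by blast
  then have "p = 2" by simp
  have "of_nat CHAR('a) = (0::'a)" by (rule of_nat_CHAR)
  then have "of_nat 2 = (0::'a)" unfolding pk(4) \<open>p = 2\<close> .
  then show ?thesis by simp
qed

lemma neg1_even: "even q \<Longrightarrow> (-1::'a) = 1"
proof -
  assume "even q"
  then have "(2::'a) = 0" by (rule char2_even)
  have "(-1::'a) = 1 - 2" by simp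
  then show ?thesis using \<open>(2::'a) = 0\<close> by simp
qed

end


lemma setcomp_eq:
  assumes "\<And>x. P x \<Longrightarrow> f (g x) = h x"
  shows "{f y | y. y \<in> {g x | x. P x}} = {h x | x. P x}"
proof (rule Set.set_eqI, rule iffI)
  fix z assume "z \<in> {f y | y. y \<in> {g x | x. P x}}"
  then obtain x where "P x" "z = f (g x)" by blast
  then show "z \<in> {h x | x. P x}" using assms by auto
next
  fix z assume "z \<in> {h x | x. P x}"
  then obtain x where x: "P x" "z = h x" by blast
  then have "z = f (g x)" using assms by simp
  then show "z \<in> {f y | y. y \<in> {g x | x. P x}}" using x(1) by blast
qed

lemma setcomp_img_eq:
  assumes "\<And>x. P x \<Longrightarrow> f (m (g x)) = h x"
  shows "{f y | y. y \<in> m ` {g x | x. P x}} = {h x | x. P x}"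
proof (rule Set.set_eqI, rule iffI)
  fix z assume "z \<in> {f y | y. y \<in> m ` {g x | x. P x}}"
  then obtain x where "P x" "z = f (m (g x))" by blast
  then show "z \<in> {h x | x. P x}" using assms by auto
next
  fix z assume "z \<in> {h x | x. P x}"
  then obtain x where x: "P x" "z = h x" by blast
  then have "z = f (m (g x))" using assms by simp
  then show "z \<in> {f y | y. y \<in> m ` {g x | x. P x}}" using x(1) by blast
qed

lemma img_eq:
  assumes "\<And>x. P x \<Longrightarrow> m (g x) = h x"
  shows "m ` {g x | x. P x} = {h x | x. P x}"
proof (rule Set.set_eqI, rule iffI)
  fix z assume "z \<in> m ` {g x | x. P x}"
  then obtain x where "P x" "z = m (g x)" by blast
  then show "z \<in> {h x | x. P x}" using assms by auto
next
  fix z assume "z \<in> {h x | x. P x}"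
  then obtain x where x: "P x" "z = h x" by blast
  then have "z = m (g x)" using assms by simp
  then show "z \<in> m ` {g x | x. P x}" using x(1) by blast
qed

lemma inv_reindex: "{h (inverse a) | a::'b::field. a \<noteq> 0} = {h x | x. x \<noteq> 0}"
proof (rule Set.set_eqI, rule iffI)
  fix y assume "y \<in> {h x | x. x \<noteq> 0}"
  then obtain x where x: "x \<noteq> 0" "y = h x" by blast
  then have "y = h (inverse (inverse x))" "inverse x \<noteq> 0" by simp_all
  then show "y \<in> {h (inverse a) | a::'b::field. a \<noteq> 0}" by blast
qed auto

context
  fixes q :: nat
  assumes pp: "\<exists>p k. prime p \<and> 0 < k \<and> q = p ^ k"
    and cardF: "card (UNIV :: 'a::{field,finite} set) = q ^ 3"
begin

lemmas frs = fr_simps[OF pp cardF]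
lemmas gB_def' = gB_def[OF pp cardF]
lemmas Bs_def' = Bs_def[OF pp cardF]
lemmas frob3_simp' = frob3_simp[OF pp cardF]
lemmas q0' = q0[OF pp cardF]
lemmas type_lemma' = type_lemma[OF pp cardF]
lemmas phi_proj' = phi_proj[OF pp cardF]
lemmas sub_lines_Bs' = sub_lines_Bs[OF pp cardF]
lemmas char2_odd' = char2_odd[OF pp cardF]
lemmas neg1_even' = neg1_even[OF pp cardF]

lemma Pr_Bs: "Pr (Bs q s) = S_theta q (1::'a)"
proof -
  have "Defs.meet (Defs.join Tpt (proj (gB q s x))) mT = proj (x * 1, x ^ q, 0)" if x: "x \<noteq> 0" for x :: 'a
  proof -
    have c1: "cross3 (0,0,1) (gB q s x) = (-(x^q), x, 0)" by (simp add: cross3_def gB_def')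
    have c2: "cross3 (-(x^q), x, 0) (0,0,1) = (x, x^q, (0::'a))" by (simp add: cross3_def)
    show ?thesis unfolding Tpt_def mT_def
      using x c1 c2 join_proj[of "(0,0,1)" "gB q s x"] meet_proj[of "(-(x^q), x, 0)" "(0,0,1)"]
      by simp
  qed
  then show ?thesis unfolding Pr_def Bs_def' S_theta_def by (rule setcomp_eq)
qed

lemma Sp_Bs:
  assumes ss: "s * s = (1::'a)"
  shows "Sp q (Bs q s) = S_theta q (-1::'a)"
proof -
  have "Defs.meet (proj (gB q s a)) mT = proj (inverse a * -1, (inverse a) ^ q, 0)" if a: "a \<noteq> 0" for a :: 'a
  proof -
    have c: "cross3 (gB q s a) (0,0,1) = (a^q, -a, 0)" by (simp add: cross3_def gB_def')
    have "proj (a^q, -a, 0) = proj (inverse a * -1, (inverse a) ^ q, 0)"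
      by (rule proj_eqI[of "- (inverse a * inverse (a^q))"]) (use a q0' in \<open>simp_all add: power_inverse field_simps\<close>)
    then show ?thesis unfolding mT_def using c a meet_proj[of "gB q s a" "(0,0,1)"] by simp
  qed
  then have "SpL (Bs q s) = {proj (inverse a * -1, (inverse a) ^ q, 0) | a. a \<noteq> 0}"
    unfolding SpL_def Bs_def' by (rule setcomp_eq)
  also have "\<dots> = S_theta q (-1)" unfolding S_theta_def
    by (rule inv_reindex[of "\<lambda>x. proj (x * -1, x ^ q, 0)"])
  finally show ?thesis unfolding Sp_def sub_lines_Bs'[OF ss] .
qed


lemma P2q_Bs: "P2q q = Bs q (1::'a)"
proof -
  have "proj (x, x ^ q, x ^ (q^2)) = proj (gB q 1 x)" for x :: 'a by (simp add: gB_def')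
  then show ?thesis unfolding P2q_def Bs_def' by simp
qed

lemma Pi_Bs: "odd q \<Longrightarrow> Pi_theta q (-1) = Bs q (-1::'a)"
proof -
  assume o: "odd q"
  have "((-1::'a) ^ (q+1)) = 1" using o by simp
  then have "proj (r * (-1::'a) ^ (q+1), r ^ q, r ^ (q^2) * -1) = proj (gB q (-1) r)" for r :: 'a
    by (simp add: gB_def')
  then show ?thesis unfolding Pi_theta_def Bs_def' by simp
qed

lemma phi_gBm: "phi q (proj (gB q (-1) (a::'a))) = proj (-a, a^q, a^(q^2))"
  by (simp add: phi_proj' gB_def' frob3_simp' frs)

lemma phi_gBm2: "phi q (proj (-a, a^q, a^(q^2))) = proj (a, -(a^q), (a::'a)^(q^2))"
  by (simp add: phi_proj' frob3_simp' frs)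

lemma cross_gBm: "cross3 (-a, a^q, a^(q^2)) (a, -(a^q), (a::'a)^(q^2)) = (2*a^q*a^(q^2), 2*a*a^(q^2), 0)"
  by (simp add: cross3_def algebra_simps)

lemma mu_line_Bs:
  assumes o: "odd q"
  shows "mu_line q ` sub_lines q (Bs q (-1)) = S_theta q (1::'a)"
proof -
  have two: "(2::'a) \<noteq> 0" using char2_odd' o .
  have "mu_line q (proj (gB q (-1) a)) = proj (inverse a * 1, (inverse a) ^ q, 0)" if a: "a \<noteq> 0" for a :: 'a
  proof -
    have nz: "(2*a^q*a^(q^2), 2*a*a^(q^2), 0) \<noteq> ((0::'a),(0::'a),(0::'a))" using a two q0' by simp
    have "proj (inverse a * 1, (inverse a) ^ q, 0) = proj (2*a^q*a^(q^2), 2*a*a^(q^2), 0)"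
      by (rule proj_eqI[of "2*a*a^q*a^(q^2)"]) (use a two q0' in \<open>simp_all add: power_inverse field_simps\<close>)
    then show ?thesis unfolding mu_line_def phi_gBm phi_gBm2
      using meet_proj[of "(-a, a^q, a^(q^2))" "(a, -(a^q), a^(q^2))"] cross_gBm nz by simp
  qed
  then have "mu_line q ` Bs q (-1::'a) = {proj (inverse a * 1, (inverse a) ^ q, 0) | a. a \<noteq> 0}"
    unfolding Bs_def' by (rule img_eq[where P="\<lambda>a. a \<noteq> 0"])
  also have "\<dots> = S_theta q 1" unfolding S_theta_def
    by (rule inv_reindex[of "\<lambda>x. proj (x * 1, x ^ q, 0)"])
  finally show ?thesis using sub_lines_Bs'[of "-1"] by simp
qed

lemma mu_pt_Bs:
  assumes o: "odd q"
  shows "SpL (mu_pt q ` Bs q (-1)) = S_theta q (-1::'a)"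
proof -
  have two: "(2::'a) \<noteq> 0" using char2_odd' o .
  have "Defs.meet (mu_pt q (proj (gB q (-1) a))) mT = proj (a * -1, a ^ q, 0)" if a: "a \<noteq> 0" for a :: 'a
  proof -
    have nz: "(2*a^q*a^(q^2), 2*a*a^(q^2), 0) \<noteq> ((0::'a),(0::'a),(0::'a))" using a two q0' by simp
    have m1: "mu_pt q (proj (gB q (-1) a)) = proj (2*a^q*a^(q^2), 2*a*a^(q^2), 0)"
      unfolding mu_pt_def phi_gBm phi_gBm2
      using join_proj[of "(-a, a^q, a^(q^2))" "(a, -(a^q), a^(q^2))"] cross_gBm nz by simp
    have c2: "cross3 (2*a^q*a^(q^2), 2*a*a^(q^2), 0) (0,0,1) = (2*a*a^(q^2), -(2*a^q*a^(q^2)), 0)"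
      by (simp add: cross3_def)
    have nz2: "(2*a*a^(q^2), -(2*a^q*a^(q^2)), 0) \<noteq> ((0::'a),(0::'a),(0::'a))" using a two q0' by simp
    have "proj (a * -1, a ^ q, 0) = proj (2*a*a^(q^2), -(2*a^q*a^(q^2)), 0)"
      by (rule proj_eqI[of "-2*a^(q^2)"]) (use a two q0' in \<open>simp_all add: field_simps\<close>)
    then show ?thesis unfolding m1 mT_def
      using meet_proj[of "(2*a^q*a^(q^2), 2*a*a^(q^2), 0)" "(0,0,1)"] c2 nz2 by simp
  qed
  then show ?thesis unfolding SpL_def Bs_def' S_theta_def by (rule setcomp_img_eq)
qed


lemma typ_Sm1: "x \<noteq> 0 \<Longrightarrow> typeII_pt q (proj (x * -1, x ^ q, (0::'a)))"
proof -
  assume x: "x \<noteq> 0"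
  have "(typeII_pt q (proj (x * -1, x ^ q, (0::'a))) \<longleftrightarrow> det3 (x * -1, x ^ q, 0) (0, -(x^q), x^(q^2)) (x, 0, -(x^(q^2))) = 0)"
    by (rule type_lemma'[THEN conjunct1]) (use x q0' in \<open>simp_all add: frob3_simp' frs cross3_def\<close>)
  moreover have "det3 (x * -1, x ^ q, 0) (0, -(x^q), x^(q^2)) (x, 0, -(x^(q^2))) = 0"
    by (simp add: det3_def dot3_def cross3_def algebra_simps)
  ultimately show ?thesis by simp
qed

lemma typ_S1: "odd q \<Longrightarrow> x \<noteq> 0 \<Longrightarrow> typeIII_pt q (proj (x * 1, x ^ q, (0::'a)))"
proof -
  assume o: "odd q" and x: "x \<noteq> 0"
  have two: "(2::'a) \<noteq> 0" using char2_odd' o .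
  have "(typeIII_pt q (proj (x * 1, x ^ q, (0::'a))) \<longleftrightarrow> det3 (x * 1, x ^ q, 0) (0, x^q, x^(q^2)) (x, 0, x^(q^2)) \<noteq> 0)"
    by (rule type_lemma'[THEN conjunct2]) (use x q0' in \<open>simp_all add: frob3_simp' frs cross3_def\<close>)
  moreover have "det3 (x * 1, x ^ q, 0) (0, x^q, x^(q^2)) (x, 0, x^(q^2)) = 2 * x * x^q * x^(q^2)"
    by (simp add: det3_def dot3_def cross3_def algebra_simps)
  ultimately show ?thesis using two x q0' by simp
qed

lemma join_T: "x \<noteq> 0 \<Longrightarrow> Defs.join Tpt (proj (x * t, x ^ q, 0)) = proj (-(x^q), x * t, (0::'a))"
proof -
  assume x: "x \<noteq> 0"
  have c: "cross3 (0,0,1) (x * t, x ^ q, 0) = (-(x^q), x * t, (0::'a))" by (simp add: cross3_def)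
  show ?thesis unfolding Tpt_def using join_proj[of "(0,0,1)" "(x * t, x ^ q, 0)"] c x q0' by simp
qed

lemma typ_TS1: "x \<noteq> 0 \<Longrightarrow> typeII_pt q (proj (-(x^q), x * 1, (0::'a)))"
proof -
  assume x: "x \<noteq> 0"
  have "(typeII_pt q (proj (-(x^q), x * 1, (0::'a))) \<longleftrightarrow> det3 (-(x^q), x * 1, 0) (0, -(x^(q^2)), x^q) (x^(q^2), 0, -x) = 0)"
    by (rule type_lemma'[THEN conjunct1]) (use x q0' in \<open>simp_all add: frob3_simp' frs cross3_def\<close>)
  moreover have "det3 (-(x^q), x * 1, 0) (0, -(x^(q^2)), x^q) (x^(q^2), 0, -x) = 0"
    by (simp add: det3_def dot3_def cross3_def algebra_simps)
  ultimately show ?thesis by simp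
qed

lemma typ_TSm1: "odd q \<Longrightarrow> x \<noteq> 0 \<Longrightarrow> typeIII_pt q (proj (-(x^q), x * -1, (0::'a)))"
proof -
  assume o: "odd q" and x: "x \<noteq> 0"
  have two: "(2::'a) \<noteq> 0" using char2_odd' o .
  have "(typeIII_pt q (proj (-(x^q), x * -1, (0::'a))) \<longleftrightarrow> det3 (-(x^q), x * -1, 0) (0, -(x^(q^2)), -(x^q)) (-(x^(q^2)), 0, -x) \<noteq> 0)"
    by (rule type_lemma'[THEN conjunct2]) (use x q0' in \<open>simp_all add: frob3_simp' frs cross3_def\<close>)
  moreover have "det3 (-(x^q), x * -1, 0) (0, -(x^(q^2)), -(x^q)) (-(x^(q^2)), 0, -x) = - (2 * x * x^q * x^(q^2))"
    by (simp add: det3_def dot3_def cross3_def algebra_simps)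
  ultimately show ?thesis using two x q0' by simp
qed

lemma all_S: "(\<forall>P\<in>S_theta q t. R P) \<longleftrightarrow> (\<forall>x. x \<noteq> 0 \<longrightarrow> R (proj (x * t, x ^ q, (0::'a))))"
  unfolding S_theta_def by blast

lemma all_TS: "(\<forall>l\<in>TS_theta q t. R l) \<longleftrightarrow> (\<forall>x. x \<noteq> 0 \<longrightarrow> R (proj (-(x^q), x * t, (0::'a))))"
proof
  assume h: "\<forall>l\<in>TS_theta q t. R l"
  show "\<forall>x. x \<noteq> 0 \<longrightarrow> R (proj (-(x^q), x * t, (0::'a)))"
  proof (intro allI impI)
    fix x :: 'a assume x: "x \<noteq> 0"
    have "Defs.join Tpt (proj (x * t, x ^ q, 0)) \<in> TS_theta q t"
      unfolding TS_theta_def S_theta_def using x by blast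
    then show "R (proj (-(x^q), x * t, (0::'a)))" using h join_T[OF x] by simp
  qed
next
  assume h: "\<forall>x. x \<noteq> 0 \<longrightarrow> R (proj (-(x^q), x * t, (0::'a)))"
  show "\<forall>l\<in>TS_theta q t. R l"
  proof
    fix l assume "l \<in> TS_theta q t"
    then obtain x where x: "x \<noteq> 0" "l = Defs.join Tpt (proj (x * t, x ^ q, 0))"
      unfolding TS_theta_def S_theta_def by blast
    then show "R l" using h join_T[OF x(1)] by simp
  qed
qed


lemma main_result:
  shows "(even q \<longrightarrow>
            (\<forall>P\<in>S_theta q (1::'a). typeII_pt q P) \<and>
            (\<forall>l\<in>TS_theta q (1::'a). typeII_ln q l) \<and>
            S_theta q (1::'a) = Pr (P2q q) \<and> S_theta q (1::'a) = Sp q (P2q q))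
       \<and> (odd q \<longrightarrow>
            ((\<forall>P\<in>S_theta q (1::'a). typeIII_pt q P) \<and>
             (\<forall>l\<in>TS_theta q (1::'a). typeII_ln q l) \<and>
             S_theta q (1::'a) = mu_line q ` sub_lines q (Pi_theta q (-1::'a)) \<and>
             S_theta q (1::'a) = Pr (P2q q) \<and>
             S_theta q (1::'a) = Pr (Pi_theta q (-1::'a)))
          \<and> ((\<forall>P\<in>S_theta q (-1::'a). typeII_pt q P) \<and>
             (\<forall>l\<in>TS_theta q (-1::'a). typeIII_ln q l) \<and>
             S_theta q (-1::'a) = SpL (mu_pt q ` Pi_theta q (-1::'a)) \<and>
             S_theta q (-1::'a) = Sp q (P2q q) \<and>
             S_theta q (-1::'a) = Sp q (Pi_theta q (-1::'a))))"
proof -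
  have Sm1: "\<forall>P\<in>S_theta q (-1::'a). typeII_pt q P" unfolding all_S using typ_Sm1 by blast
  have TS1: "\<forall>l\<in>TS_theta q (1::'a). typeII_ln q l" unfolding all_TS typeII_ln_eq using typ_TS1 by blast
  have Pr1: "S_theta q (1::'a) = Pr (P2q q)" using Pr_Bs P2q_Bs by simp
  have Sp1: "S_theta q (-1::'a) = Sp q (P2q q)" using Sp_Bs[of 1] P2q_Bs by simp
  have ev: "even q \<longrightarrow>
            (\<forall>P\<in>S_theta q (1::'a). typeII_pt q P) \<and>
            (\<forall>l\<in>TS_theta q (1::'a). typeII_ln q l) \<and>
            S_theta q (1::'a) = Pr (P2q q) \<and> S_theta q (1::'a) = Sp q (P2q q)"
  proof
    assume e: "even q"
    have m: "(-1::'a) = 1" using neg1_even' e .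
    show "(\<forall>P\<in>S_theta q (1::'a). typeII_pt q P) \<and>
            (\<forall>l\<in>TS_theta q (1::'a). typeII_ln q l) \<and>
            S_theta q (1::'a) = Pr (P2q q) \<and> S_theta q (1::'a) = Sp q (P2q q)"
      using Sm1 TS1 Pr1 Sp1 unfolding m by simp
  qed
  have od: "odd q \<longrightarrow>
            ((\<forall>P\<in>S_theta q (1::'a). typeIII_pt q P) \<and>
             (\<forall>l\<in>TS_theta q (1::'a). typeII_ln q l) \<and>
             S_theta q (1::'a) = mu_line q ` sub_lines q (Pi_theta q (-1::'a)) \<and>
             S_theta q (1::'a) = Pr (P2q q) \<and>
             S_theta q (1::'a) = Pr (Pi_theta q (-1::'a)))
          \<and> ((\<forall>P\<in>S_theta q (-1::'a). typeII_pt q P) \<and>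
             (\<forall>l\<in>TS_theta q (-1::'a). typeIII_ln q l) \<and>
             S_theta q (-1::'a) = SpL (mu_pt q ` Pi_theta q (-1::'a)) \<and>
             S_theta q (-1::'a) = Sp q (P2q q) \<and>
             S_theta q (-1::'a) = Sp q (Pi_theta q (-1::'a)))"
  proof
    assume o: "odd q"
    have S1: "\<forall>P\<in>S_theta q (1::'a). typeIII_pt q P" unfolding all_S using typ_S1[OF o] by blast
    have TSm1: "\<forall>l\<in>TS_theta q (-1::'a). typeIII_ln q l" unfolding all_TS typeIII_ln_eq
      using typ_TSm1[OF o] by blast
    have Pi: "Pi_theta q (-1::'a) = Bs q (-1)" using Pi_Bs[OF o] .
    have a: "S_theta q (1::'a) = mu_line q ` sub_lines q (Pi_theta q (-1::'a))"
      using mu_line_Bs[OF o] Pi by simp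
    have b: "S_theta q (1::'a) = Pr (Pi_theta q (-1::'a))" using Pr_Bs Pi by simp
    have c: "S_theta q (-1::'a) = SpL (mu_pt q ` Pi_theta q (-1::'a))" using mu_pt_Bs[OF o] Pi by simp
    have d: "S_theta q (-1::'a) = Sp q (Pi_theta q (-1::'a))" using Sp_Bs[of "-1"] Pi by simp
    show "((\<forall>P\<in>S_theta q (1::'a). typeIII_pt q P) \<and>
             (\<forall>l\<in>TS_theta q (1::'a). typeII_ln q l) \<and>
             S_theta q (1::'a) = mu_line q ` sub_lines q (Pi_theta q (-1::'a)) \<and>
             S_theta q (1::'a) = Pr (P2q q) \<and>
             S_theta q (1::'a) = Pr (Pi_theta q (-1::'a)))
          \<and> ((\<forall>P\<in>S_theta q (-1::'a). typeII_pt q P) \<and>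
             (\<forall>l\<in>TS_theta q (-1::'a). typeIII_ln q l) \<and>
             S_theta q (-1::'a) = SpL (mu_pt q ` Pi_theta q (-1::'a)) \<and>
             S_theta q (-1::'a) = Sp q (P2q q) \<and>
             S_theta q (-1::'a) = Sp q (Pi_theta q (-1::'a)))"
      using S1 TS1 a Pr1 b Sm1 TSm1 c Sp1 d by blast
  qed
  show ?thesis using ev od by blast
qed

end



theorem corollary5p2:
  fixes q :: nat
  assumes "\<exists>p k. prime p \<and> 0 < k \<and> q = p ^ k"
    and "card (UNIV :: 'a::{field,finite} set) = q ^ 3"
  shows "(even q \<longrightarrow>
            (\<forall>P\<in>S_theta q (1::'a). typeII_pt q P) \<and>
            (\<forall>l\<in>TS_theta q (1::'a). typeII_ln q l) \<and>
            S_theta q (1::'a) = Pr (P2q q) \<and> S_theta q (1::'a) = Sp q (P2q q))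
       \<and> (odd q \<longrightarrow>
            ((\<forall>P\<in>S_theta q (1::'a). typeIII_pt q P) \<and>
             (\<forall>l\<in>TS_theta q (1::'a). typeII_ln q l) \<and>
             S_theta q (1::'a) = mu_line q ` sub_lines q (Pi_theta q (-1::'a)) \<and>
             S_theta q (1::'a) = Pr (P2q q) \<and>
             S_theta q (1::'a) = Pr (Pi_theta q (-1::'a)))
          \<and> ((\<forall>P\<in>S_theta q (-1::'a). typeII_pt q P) \<and>
             (\<forall>l\<in>TS_theta q (-1::'a). typeIII_ln q l) \<and>
             S_theta q (-1::'a) = SpL (mu_pt q ` Pi_theta q (-1::'a)) \<and>
             S_theta q (-1::'a) = Sp q (P2q q) \<and>
             S_theta q (-1::'a) = Sp q (Pi_theta q (-1::'a))))"
  using main_result[OF assms] .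

end
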